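(* For every round $r$, there is at least one block $b$ of round $r$ such that every valid block of round $r+2$ has a path to $b$.
   Context: There are $n=3f+1$ validators, at most $f$ Byzantine; every honest validator creates exactly one block in every round. Every valid block of round $r$ has as parents (hash references) at least $2f+1$ blocks of round $r-1$ from distinct validators. There is a path from $b$ to $b'$ if $b'$ is reached from $b$ by repeatedly following parent references. *)

theory Defs
  imports Main
begin

text \<open>A DAG of blocks. Each block has an author (validator), a round number and a set
of parents (hash references). Blocks of round 0 are genesis blocks.\<close>

definition valid_block ::
  "nat \<Rightarrow> ('b \<Rightarrow> 'v) \<Rightarrow> ('b \<Rightarrow> nat) \<Rightarrow> ('b \<Rightarrow> 'b set) \<Rightarrow> 'b \<Rightarrow> bool" where
  "valid_block f author round parents b \<longleftrightarrow>
     (0 < round b \<longrightarrow>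
        2 * f + 1 \<le> card (author ` {p \<in> parents b. round p = round b - 1}))"

definition has_path :: "('b \<Rightarrow> 'b set) \<Rightarrow> 'b \<Rightarrow> 'b \<Rightarrow> bool" where
  "has_path parents b b' \<longleftrightarrow> (\<lambda>x y. y \<in> parents x)\<^sup>*\<^sup>* b b'"

end

theory Submission
  imports Defs
begin

theorem lemma10:
  fixes f :: nat
    and V Byz :: "'v set"
    and Blocks :: "'b set"
    and author :: "'b \<Rightarrow> 'v"
    and round :: "'b \<Rightarrow> nat"
    and parents :: "'b \<Rightarrow> 'b set"
    and r :: nat
  assumes finV: "finite V"
    and cardV: "card V = 3 * f + 1"
    and Byz_sub: "Byz \<subseteq> V"
    and cardByz: "card Byz \<le> f"
    and author_in: "\<And>b. b \<in> Blocks \<Longrightarrow> author b \<in> V"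
    and parents_closed: "\<And>b. b \<in> Blocks \<Longrightarrow> parents b \<subseteq> Blocks"
    and honest_one: "\<And>v r'. v \<in> V - Byz \<Longrightarrow>
                        \<exists>!b. b \<in> Blocks \<and> author b = v \<and> round b = r'"
    and honest_valid: "\<And>b. b \<in> Blocks \<Longrightarrow> author b \<in> V - Byz \<Longrightarrow>
                        valid_block f author round parents b"
  shows "\<exists>b \<in> Blocks. round b = r \<and>
           (\<forall>b' \<in> Blocks. round b' = r + 2 \<and> valid_block f author round parents b'
                \<longrightarrow> has_path parents b' b)"
proof -
  define H where "H = V - Byz"
  define blk where "blk = (\<lambda>r' v. THE b. b \<in> Blocks \<and> author b = v \<and> round b = r')"
  have blk: "blk r' v \<in> Blocks \<and> author (blk r' v) = v \<and> round (blk r' v) = r'"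
    if "v \<in> H" for r' v
    unfolding blk_def using theI'[OF honest_one[of v r']] that H_def by blast
  have blk_uniq: "p = blk r' v" if "v \<in> H" "p \<in> Blocks" "author p = v" "round p = r'" for p r' v
    using honest_one[of v r'] blk[of v r'] that H_def by blast
  have finH: "finite H" using finV H_def by simp
  have cardH: "card H \<ge> 2 * f + 1"
    using card_Diff_subset[OF finite_subset[OF Byz_sub finV] Byz_sub] cardV cardByz H_def by simp
  define R where "R = (\<lambda>v. {u \<in> H. blk r u \<in> parents (blk (r+1) v)})"
  have Rcard: "card (R v) \<ge> f + 1" if vH: "v \<in> H" for v
  proof -
    let ?c = "blk (r+1) v"
    have cB: "?c \<in> Blocks" and ca: "author ?c = v" and cr: "round ?c = r+1" using blk[OF vH] by auto
    define A where "A = author ` {p \<in> parents ?c. round p = r}"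
    have "valid_block f author round parents ?c" using honest_valid cB ca vH H_def by simp
    hence cA: "2 * f + 1 \<le> card A" unfolding valid_block_def A_def using cr by simp
    have AV: "A \<subseteq> V" unfolding A_def using author_in parents_closed[OF cB] by blast
    have "A \<subseteq> (A \<inter> H) \<union> Byz" using AV H_def by blast
    hence "card A \<le> card (A \<inter> H) + card Byz"
      by (meson card_Un_le card_mono finV finite_Un finite_subset Byz_sub finite_Int finH le_trans)
    hence "card (A \<inter> H) \<ge> f + 1" using cA cardByz by linarith
    moreover have "A \<inter> H \<subseteq> R v"
    proof
      fix u assume "u \<in> A \<inter> H"
      then obtain p where p: "p \<in> parents ?c" "round p = r" "author p = u" "u \<in> H"
        unfolding A_def by blast
      have "p \<in> Blocks" using p parents_closed[OF cB] by blast
      hence "p = blk r u" using blk_uniq p by blast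
      thus "u \<in> R v" using p R_def by simp
    qed
    moreover have "finite (R v)" using finH R_def by simp
    ultimately show ?thesis by (meson card_mono le_trans)
  qed
  define S where "S = (\<lambda>u. {v \<in> H. u \<in> R v})"
  have "\<exists>u \<in> H. card (S u) \<ge> f + 1"
  proof (rule ccontr)
    assume "\<not> ?thesis"
    hence le: "\<forall>u\<in>H. card (S u) \<le> f" by auto
    have eq1: "card (R v) = (\<Sum>u\<in>H. if u \<in> R v then 1 else 0)" if "v \<in> H" for v
      using finH by (simp add: sum.If_cases R_def Int_def)
    have eq2: "card (S u) = (\<Sum>v\<in>H. if u \<in> R v then 1 else 0)" for u
      using finH by (simp add: sum.If_cases S_def Int_def)
    have "(\<Sum>v\<in>H. card (R v)) = (\<Sum>v\<in>H. \<Sum>u\<in>H. if u \<in> R v then 1 else 0)"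
      using eq1 by simp
    also have "\<dots> = (\<Sum>u\<in>H. \<Sum>v\<in>H. if u \<in> R v then 1 else 0)" by (rule sum.swap)
    also have "\<dots> = (\<Sum>u\<in>H. card (S u))" using eq2 by simp
    also have "\<dots> \<le> (\<Sum>u\<in>H. f)" using le by (meson sum_mono)
    finally have a: "(\<Sum>v\<in>H. card (R v)) \<le> card H * f" by simp
    have "(\<Sum>v\<in>H. f + 1) \<le> (\<Sum>v\<in>H. card (R v))" using Rcard by (meson sum_mono)
    hence "card H * (f+1) \<le> card H * f" using a by simp
    thus False using cardH by simp
  qed
  then obtain u where uH: "u \<in> H" and Su: "card (S u) \<ge> f + 1" by blast
  have bB: "blk r u \<in> Blocks" and br: "round (blk r u) = r" using blk[OF uH] by auto
  show ?thesis
  proof (intro bexI[OF _ bB] conjI br ballI impI)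
    fix b' assume b'B: "b' \<in> Blocks" and h: "round b' = r + 2 \<and> valid_block f author round parents b'"
    define A where "A = author ` {p \<in> parents b'. round p = r + 1}"
    have cA: "2 * f + 1 \<le> card A"
    proof -
      have "round b' - 1 = r + 1" "0 < round b'" using h by auto
      thus ?thesis using h unfolding valid_block_def A_def by metis
    qed
    have AV: "A \<subseteq> V" unfolding A_def using author_in parents_closed[OF b'B] by blast
    have SV: "S u \<subseteq> V" unfolding S_def H_def by blast
    have "card (A \<union> S u) \<le> 3 * f + 1" using card_mono[OF finV] AV SV cardV by (metis Un_least)
    moreover have "card (A \<union> S u) + card (A \<inter> S u) = card A + card (S u)"
      using card_Un_Int[of A "S u"] finite_subset[OF AV finV] finite_subset[OF SV finV] by simp
    ultimately have "card (A \<inter> S u) > 0" using cA Su by linarith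
    then obtain v where v: "v \<in> A" "v \<in> S u" by (metis card_gt_0_iff Int_iff ex_in_conv)
    then obtain p where p: "p \<in> parents b'" "round p = r + 1" "author p = v" unfolding A_def by blast
    have vH: "v \<in> H" using v S_def by simp
    have "p \<in> Blocks" using p parents_closed[OF b'B] by blast
    hence "p = blk (r+1) v" using blk_uniq p vH by blast
    hence "blk r u \<in> parents p" using v S_def R_def by simp
    thus "has_path parents b' (blk r u)" unfolding has_path_def using p(1)
      by (meson converse_rtranclp_into_rtranclp rtranclp.rtrancl_refl)
  qed
qed

end
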